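(* Let $A\in\mathbb{R}^{n\times n}$ be symmetric, $g\in\mathbb{R}^n$ nonzero, $\Delta>0$, and let $x_k,\lambda_k,T_k,\beta_k$ be the quantities of the $k$-th step of the GLTR method described in the context. Let $r_k=(A+\lambda_kI)x_k+g$ and let $\kappa_k=\lambda_{\max}(T_k+\lambda_kI)/\lambda_{\min}(T_k+\lambda_kI)$ be the 2-condition number of $T_k+\lambda_kI$. Then $$\|r_k\|\le 2\beta_k\|x_k\|\Big(\frac{\sqrt{\kappa_k}-1}{\sqrt{\kappa_k}+1}\Big)^{k-1}.$$
   Context: All norms are Euclidean. The Lanczos process on $A$ with starting vector $g$ gives $Q_k=[q_1,\ldots,q_k]$ with orthonormal columns spanning $\mathcal{K}_k(A,g)=\mathrm{span}\{g,\ldots,A^{k-1}g\}$, $q_1=g/\|g\|$, symmetric tridiagonal $T_k=Q_k^TAQ_k$ with off-diagonal entries $\beta_1,\ldots,\beta_{k-1}$, and $AQ_k=Q_kT_k+\beta_kq_{k+1}e_k^T$ ($\beta_k$ is the $(k,k+1)$ entry of $T_{k+1}$). The GLTR iterate is $x_k=Q_kh_k$ where $h_k$ is the minimizer of $\frac12h^TT_kh+\|g\|h^Te_1$ over $\|h\|\le\Delta$ with Lagrange multiplier $\lambda_k\ge0$: $(T_k+\lambda_kI)h_k=-\|g\|e_1$, $\lambda_k(\Delta-\|h_k\|)=0$, and $T_k+\lambda_kI$ is positive definite. *)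

theory Defs
  imports "HOL-Analysis.Analysis"
begin

text \<open>Small k x k real matrices are represented as functions nat => nat => real,
  with indices ranging over {1..k}; vectors in R^k as functions nat => real on {1..k}.\<close>

definition is_eigenvalue_k :: "nat \<Rightarrow> (nat \<Rightarrow> nat \<Rightarrow> real) \<Rightarrow> real \<Rightarrow> bool" where
  "is_eigenvalue_k k M \<mu> \<longleftrightarrow>
     (\<exists>v::nat \<Rightarrow> real. (\<exists>i\<in>{1..k}. v i \<noteq> 0) \<and>
        (\<forall>i\<in>{1..k}. (\<Sum>j=1..k. M i j * v j) = \<mu> * v i))"

definition lam_max_k :: "nat \<Rightarrow> (nat \<Rightarrow> nat \<Rightarrow> real) \<Rightarrow> real" where
  "lam_max_k k M = Max {\<mu>. is_eigenvalue_k k M \<mu>}"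

definition lam_min_k :: "nat \<Rightarrow> (nat \<Rightarrow> nat \<Rightarrow> real) \<Rightarrow> real" where
  "lam_min_k k M = Min {\<mu>. is_eigenvalue_k k M \<mu>}"

definition pos_def_k :: "nat \<Rightarrow> (nat \<Rightarrow> nat \<Rightarrow> real) \<Rightarrow> bool" where
  "pos_def_k k M \<longleftrightarrow>
     (\<forall>v::nat \<Rightarrow> real. (\<exists>i\<in>{1..k}. v i \<noteq> 0) \<longrightarrow>
        (\<Sum>i=1..k. \<Sum>j=1..k. v i * M i j * v j) > 0)"

definition norm_k :: "nat \<Rightarrow> (nat \<Rightarrow> real) \<Rightarrow> real" where
  "norm_k k h = sqrt (\<Sum>i=1..k. (h i)\<^sup>2)"

definition krylov :: "real^'n^'n \<Rightarrow> real^'n \<Rightarrow> nat \<Rightarrow> (real^'n) set" where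
  "krylov A g j = span {((\<lambda>v. A *v v) ^^ i) g | i. i < j}"

definition lanczos_T :: "real^'n^'n \<Rightarrow> (nat \<Rightarrow> real^'n) \<Rightarrow> nat \<Rightarrow> nat \<Rightarrow> real" where
  "lanczos_T A q i j = q i \<bullet> (A *v q j)"

definition tr_obj :: "nat \<Rightarrow> (nat \<Rightarrow> nat \<Rightarrow> real) \<Rightarrow> real \<Rightarrow> (nat \<Rightarrow> real) \<Rightarrow> real" where
  "tr_obj k T gn h = (1/2) * (\<Sum>i=1..k. \<Sum>j=1..k. h i * T i j * h j) + gn * h 1"

end

theory Submission
  imports Defs
begin

lemma two_step_induct:
  assumes "P 0" "P (Suc 0)" "\<And>n. P n \<Longrightarrow> P (Suc n) \<Longrightarrow> P (Suc (Suc n))"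
  shows "P n"
proof -
  have "P n \<and> P (Suc n)" by (induction n) (use assms in auto)
  then show ?thesis by simp
qed

fun cheb :: "nat \<Rightarrow> real \<Rightarrow> real" where
  "cheb 0 x = 1"
| "cheb (Suc 0) x = x"
| "cheb (Suc (Suc n)) x = 2 * x * cheb (Suc n) x - cheb n x"

lemma cheb_cos: "cheb n (cos t) = cos (real n * t)"
proof (induction n rule: two_step_induct)
  case (3 n)
  have "cos (real (Suc (Suc n)) * t) + cos (real n * t) = 2 * cos t * cos (real (Suc n) * t)"
  proof -
    have e1: "real (Suc (Suc n)) * t = real (Suc n) * t + t" by (simp add: algebra_simps)
    have e2: "real n * t = real (Suc n) * t - t" by (simp add: algebra_simps)
    show ?thesis unfolding e1 e2 cos_add cos_diff by simp
  qed
  then show ?case using 3 by simp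
qed simp_all

lemma cheb_bound: "\<bar>x\<bar> \<le> 1 \<Longrightarrow> \<bar>cheb n x\<bar> \<le> 1"
proof -
  assume "\<bar>x\<bar> \<le> 1"
  then have "cos (arccos x) = x" by (simp add: cos_arccos_abs)
  then have "cheb n x = cos (real n * arccos x)" using cheb_cos by metis
  then show ?thesis by simp
qed

lemma cheb_big:
  assumes "x \<ge> 1"
  shows "cheb n x = ((x + sqrt (x^2-1))^n + (x - sqrt (x^2-1))^n) / 2"
proof -
  define z where "z = x + sqrt (x^2-1)"
  define w where "w = x - sqrt (x^2-1)"
  have zw: "z * w = 1" using assms by (simp add: z_def w_def algebra_simps power2_eq_square[symmetric])
  have zpw: "z + w = 2 * x" by (simp add: z_def w_def)
  have "cheb n x = (z^n + w^n)/2"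
  proof (induction n rule: two_step_induct)
    case (3 n)
    have "cheb (Suc (Suc n)) x = (z+w) * ((z^Suc n + w^Suc n)/2) - (z*w)*((z^n+w^n)/2)"
      unfolding cheb.simps 3 zw zpw[symmetric] by simp
    also have "\<dots> = (z^(Suc (Suc n)) + w^(Suc (Suc n))) / 2"
      by (simp add: algebra_simps add_divide_distrib)
    finally show ?case .
  qed (use zpw in simp_all)
  then show ?thesis by (simp add: z_def w_def)
qed

definition polyfun :: "nat \<Rightarrow> (real \<Rightarrow> real) \<Rightarrow> bool" where
  "polyfun m F \<longleftrightarrow> (\<exists>c. \<forall>t. F t = (\<Sum>i\<le>m. c i * t^i))"

lemma polyfun_const: "polyfun m (\<lambda>t. a)"
  unfolding polyfun_def
proof (intro exI[of _ "\<lambda>i. if i = 0 then a else 0"] allI)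
  fix t :: real
  have "(\<Sum>i\<le>m. (if i = 0 then a else 0) * t^i) = (\<Sum>i\<le>m. if i = 0 then a else 0)"
    by (rule sum.cong) auto
  then show "a = (\<Sum>i\<le>m. (if i = 0 then a else 0) * t^i)" by simp
qed

lemma polyfun_mono:
  assumes "m \<le> m'" "polyfun m F" shows "polyfun m' F"
proof -
  obtain c where c: "\<And>t. F t = (\<Sum>i\<le>m. c i * t^i)" using assms(2) unfolding polyfun_def by blast
  define c' where "c' i = (if i \<le> m then c i else 0)" for i
  have "F t = (\<Sum>i\<le>m'. c' i * t^i)" for t
  proof -
    have "(\<Sum>i\<le>m'. c' i * t^i) = (\<Sum>i\<le>m. c' i * t^i)"
      by (rule sum.mono_neutral_right) (use assms(1) in \<open>auto simp: c'_def\<close>)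
    also have "\<dots> = F t" by (simp add: c c'_def)
    finally show ?thesis by simp
  qed
  then show ?thesis unfolding polyfun_def by blast
qed

lemma polyfun_add:
  assumes "polyfun m F" "polyfun m G" shows "polyfun m (\<lambda>t. F t + G t)"
proof -
  obtain c where c: "\<And>t. F t = (\<Sum>i\<le>m. c i * t^i)" using assms(1) unfolding polyfun_def by blast
  obtain d where d: "\<And>t. G t = (\<Sum>i\<le>m. d i * t^i)" using assms(2) unfolding polyfun_def by blast
  have "F t + G t = (\<Sum>i\<le>m. (c i + d i) * t^i)" for t
    by (simp add: c d sum.distrib distrib_right)
  then show ?thesis unfolding polyfun_def by (intro exI[of _ "\<lambda>i. c i + d i"]) simp
qed

lemma polyfun_scale:
  assumes "polyfun m F" shows "polyfun m (\<lambda>t. a * F t)"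
proof -
  obtain c where c: "\<And>t. F t = (\<Sum>i\<le>m. c i * t^i)" using assms(1) unfolding polyfun_def by blast
  have "a * F t = (\<Sum>i\<le>m. (a * c i) * t^i)" for t
    by (simp add: c sum_distrib_left mult.assoc)
  then show ?thesis unfolding polyfun_def by (intro exI[of _ "\<lambda>i. a * c i"]) simp
qed

lemma polyfun_x:
  assumes "polyfun m F" shows "polyfun (Suc m) (\<lambda>t. t * F t)"
proof -
  obtain c where c: "\<And>t. F t = (\<Sum>i\<le>m. c i * t^i)" using assms(1) unfolding polyfun_def by blast
  define c' where "c' i = (if i = 0 then 0 else c (i - 1))" for i
  have "t * F t = (\<Sum>i\<le>Suc m. c' i * t^i)" for t
    by (simp add: c sum.atMost_Suc_shift c'_def sum_distrib_left algebra_simps del: sum.atMost_Suc)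
  then show ?thesis unfolding polyfun_def by (intro exI[of _ c']) simp
qed

lemma polyfun_cheb: "polyfun n (\<lambda>t. cheb n (\<alpha> + \<gamma> * t))"
proof (induction n rule: two_step_induct)
  case 1 then show ?case by (simp add: polyfun_const)
next
  case 2
  have "polyfun (Suc 0) (\<lambda>t. \<alpha> + \<gamma> * (t * 1))"
    by (intro polyfun_add polyfun_scale polyfun_x polyfun_const)
  then show ?case by simp
next
  case (3 n)
  have a: "polyfun (Suc (Suc n)) (\<lambda>t. (2 * \<alpha>) * cheb (Suc n) (\<alpha> + \<gamma> * t))"
    by (rule polyfun_mono[OF _ polyfun_scale[OF 3(2)]]) simp
  have b: "polyfun (Suc (Suc n)) (\<lambda>t. (2 * \<gamma>) * (t * cheb (Suc n) (\<alpha> + \<gamma> * t)))"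
    by (rule polyfun_scale[OF polyfun_x[OF 3(2)]])
  have c: "polyfun (Suc (Suc n)) (\<lambda>t. (-1) * cheb n (\<alpha> + \<gamma> * t))"
    by (rule polyfun_mono[OF _ polyfun_scale[OF 3(1)]]) simp
  have "polyfun (Suc (Suc n)) (\<lambda>t. ((2 * \<alpha>) * cheb (Suc n) (\<alpha> + \<gamma> * t)
      + (2 * \<gamma>) * (t * cheb (Suc n) (\<alpha> + \<gamma> * t))) + (-1) * cheb n (\<alpha> + \<gamma> * t))"
    by (intro polyfun_add a b c)
  then show ?case by (simp add: algebra_simps)
qed

lemma polyfun_coeff0:
  assumes "polyfun m F" shows "\<exists>c. c 0 = F 0 \<and> (\<forall>t. F t = (\<Sum>i\<le>m. c i * t^i))"
proof -
  obtain c where c: "\<And>t. F t = (\<Sum>i\<le>m. c i * t^i)" using assms(1) unfolding polyfun_def by blast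
  have "(\<Sum>i\<le>m. c i * 0^i) = (\<Sum>i\<le>m. if i = 0 then c 0 else 0)"
    by (rule sum.cong) auto
  then have "F 0 = c 0" by (simp add: c)
  then show ?thesis using c by metis
qed

lemma cheb_poly_exists:
  assumes a0: "0 < a" and ab: "a \<le> b"
  shows "\<exists>c. c 0 = 1 \<and> (\<forall>t\<in>{a..b}. \<bar>\<Sum>i\<le>m. c i * t^i\<bar>
           \<le> 2 * ((sqrt (b/a) - 1) / (sqrt (b/a) + 1)) ^ m)"
proof (cases "a = b")
  case True
  show ?thesis
  proof (cases m)
    case 0
    then show ?thesis by (intro exI[of _ "\<lambda>i. 1"]) simp
  next
    case (Suc m')
    have "polyfun (Suc 0) (\<lambda>t. 1 + (-1/a) * (t * 1))"
      by (intro polyfun_add polyfun_scale polyfun_x polyfun_const)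
    then have "polyfun m (\<lambda>t. 1 + (-1/a) * (t * 1))"
      by (rule polyfun_mono[rotated]) (simp add: Suc)
    from polyfun_coeff0[OF this] obtain c where c0': "c 0 = 1 + (-1/a) * (0 * 1)"
      and c: "\<And>t. 1 + (-1/a) * (t * 1) = (\<Sum>i\<le>m. c i * t^i)" by blast
    have c0: "c 0 = 1" using c0' by simp
    show ?thesis
    proof (intro exI[of _ c] conjI ballI)
      fix t assume "t \<in> {a..b}"
      then have "t = a" using True by simp
      then have "(\<Sum>i\<le>m. c i * t^i) = 0" using c[of t] a0 by simp
      then show "\<bar>\<Sum>i\<le>m. c i * t^i\<bar> \<le> 2 * ((sqrt (b/a) - 1) / (sqrt (b/a) + 1)) ^ m"
        using True a0 by simp
    qed (rule c0)
  qed
next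
  case False
  then have ab': "a < b" using ab by simp
  define \<sigma> where "\<sigma> = (b + a) / (b - a)"
  define \<gamma> where "\<gamma> = -2 / (b - a)"
  define C where "C = cheb m \<sigma>"
  define s where "s = sqrt (b/a)"
  have s1: "s > 1" using ab' a0 by (simp add: s_def)
  have ss: "s^2 = b/a" using ab a0 by (simp add: s_def)
  have bs: "b = a * s^2" using ss a0 by (simp add: field_simps)
  have "\<sigma> = (a * (s^2 + 1)) / (a * (s^2 - 1))" by (simp add: \<sigma>_def bs algebra_simps)
  then have \<sigma>s: "\<sigma> = (s^2 + 1) / (s^2 - 1)"
    using a0 by simp
  have \<sigma>1: "\<sigma> \<ge> 1" using s1 by (simp add: \<sigma>s field_simps)
  have sq: "sqrt (\<sigma>^2 - 1) = 2 * s / (s^2 - 1)"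
  proof (rule real_sqrt_unique)
    have d: "s^2 - 1 \<noteq> 0" using s1 by (simp add: power2_eq_square) (smt (verit) mult_less_cancel_right1)
    have "\<sigma>^2 - 1 = ((s^2+1)^2 - (s^2-1)^2) / (s^2 - 1)^2"
      unfolding \<sigma>s using d by (simp add: power_divide diff_divide_distrib)
    also have "\<dots> = (2 * s)^2 / (s^2 - 1)^2" by (simp add: power2_eq_square algebra_simps)
    finally show "(2 * s / (s^2 - 1))^2 = \<sigma>^2 - 1" by (simp add: power_divide)
    show "0 \<le> 2 * s / (s^2 - 1)" using s1 by (simp add: field_simps)
  qed
  have z: "\<sigma> + sqrt (\<sigma>^2 - 1) = (s + 1) / (s - 1)"
  proof -
    have d1: "s - 1 \<noteq> 0" "s + 1 \<noteq> 0" using s1 by auto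
    have "\<sigma> + sqrt (\<sigma>^2 - 1) = (s^2 + 1 + 2 * s) / (s^2 - 1)"
      unfolding sq unfolding \<sigma>s by (simp add: add_divide_distrib)
    also have "\<dots> = ((s + 1) * (s + 1)) / ((s - 1) * (s + 1))"
      by (simp add: power2_eq_square algebra_simps)
    also have "\<dots> = (s + 1) / (s - 1)" using d1 by simp
    finally show ?thesis .
  qed
  have w: "\<sigma> - sqrt (\<sigma>^2 - 1) \<ge> 0"
  proof -
    have "sqrt (\<sigma>^2 - 1) \<le> sqrt (\<sigma>^2)" by (rule real_sqrt_le_mono) simp
    then show ?thesis using \<sigma>1 by simp
  qed
  have C_eq: "C = (((s + 1) / (s - 1))^m + (\<sigma> - sqrt (\<sigma>^2 - 1))^m) / 2"
    unfolding C_def cheb_big[OF \<sigma>1] z ..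
  have Cge: "C \<ge> ((s + 1) / (s - 1))^m / 2"
    unfolding C_eq using w by simp
  have zpos: "(s + 1) / (s - 1) > 0" using s1 by simp
  have Cpos: "C > 0" using Cge zpos
    by (smt (verit) zero_less_power divide_pos_pos)
  have invC: "1 / C \<le> 2 * ((s - 1) / (s + 1)) ^ m"
  proof -
    have "1 / C \<le> 1 / (((s + 1) / (s - 1))^m / 2)"
      using Cge Cpos zpos by (intro divide_left_mono) auto
    also have "\<dots> = 2 * ((s - 1) / (s + 1)) ^ m"
      by (simp add: power_divide)
    finally show ?thesis .
  qed
  have "polyfun m (\<lambda>t. (1 / C) * cheb m (\<sigma> + \<gamma> * t))"
    by (intro polyfun_scale polyfun_cheb)
  from polyfun_coeff0[OF this] obtain c where c0: "c 0 = (1 / C) * cheb m (\<sigma> + \<gamma> * 0)"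
    and c: "\<And>t. (1 / C) * cheb m (\<sigma> + \<gamma> * t) = (\<Sum>i\<le>m. c i * t^i)"
    by blast
  show ?thesis
  proof (intro exI[of _ c] conjI ballI)
    show "c 0 = 1" using c0 Cpos by (simp add: C_def)
    fix t assume t: "t \<in> {a..b}"
    have "\<bar>\<sigma> + \<gamma> * t\<bar> \<le> 1"
    proof -
      have "\<sigma> + \<gamma> * t = (b + a - 2 * t) / (b - a)"
      proof -
        have ne: "b - a \<noteq> 0" using ab' by simp
        show ?thesis unfolding \<sigma>_def \<gamma>_def using ne
          by (simp add: divide_simps)
      qed
      moreover have "\<bar>(b + a - 2 * t) / (b - a)\<bar> \<le> 1"
        using ab' t by (simp add: abs_le_iff field_simps) (simp add: abs_if)
      ultimately show ?thesis by simp
    qed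
    then have "\<bar>cheb m (\<sigma> + \<gamma> * t)\<bar> \<le> 1" by (rule cheb_bound)
    then have "\<bar>(1 / C) * cheb m (\<sigma> + \<gamma> * t)\<bar> \<le> 1 / C"
      using Cpos by (simp add: abs_mult divide_right_mono)
    then show "\<bar>\<Sum>i\<le>m. c i * t^i\<bar> \<le> 2 * ((sqrt (b/a) - 1) / (sqrt (b/a) + 1)) ^ m"
      using invC c[of t] unfolding s_def by linarith
  qed
qed


definition eigs :: "('a::real_inner \<Rightarrow> 'a) \<Rightarrow> 'a set \<Rightarrow> real set" where
  "eigs f V = {\<mu>. \<exists>v\<in>V. v \<noteq> 0 \<and> f v = \<mu> *\<^sub>R v}"

definition pf :: "('a::real_vector \<Rightarrow> 'a) \<Rightarrow> (nat \<Rightarrow> real) \<Rightarrow> nat \<Rightarrow> 'a \<Rightarrow> 'a" where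
  "pf f c d y = (\<Sum>i\<le>d. c i *\<^sub>R (f^^i) y)"

lemma linear_funpow: fixes f :: "'a::real_vector \<Rightarrow> 'a" shows "linear f \<Longrightarrow> linear (f^^i)"
proof (induction i)
  case 0
  have "f^^0 = (\<lambda>x. x)" by (simp add: id_def)
  then show ?case by (simp add: linear_iff)
next
  case (Suc i)
  have "f^^Suc i = f \<circ> (f^^i)" by simp
  then show ?case using linear_compose[OF Suc.IH[OF Suc.prems] Suc.prems] by (simp only:)
qed

lemma linear_pf: "linear f \<Longrightarrow> linear (pf f c d)"
  unfolding pf_def
  by (intro linear_compose_sum ballI linear_compose_scale_right linear_funpow)

lemma funpow_inv: "f ` V \<subseteq> V \<Longrightarrow> y \<in> V \<Longrightarrow> (f^^i) y \<in> V"
  by (induction i) auto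

lemma pf_inv: "subspace V \<Longrightarrow> f ` V \<subseteq> V \<Longrightarrow> y \<in> V \<Longrightarrow> pf f c d y \<in> V"
  unfolding pf_def
  by (intro subspace_sum subspace_scale funpow_inv) auto

lemma funpow_eig: "f u = \<mu> *\<^sub>R u \<Longrightarrow> linear f \<Longrightarrow> (f^^i) u = (\<mu>^i) *\<^sub>R u"
  by (induction i) (simp_all add: linear_cmul)

lemma pf_eig: assumes "f u = \<mu> *\<^sub>R u" "linear f" shows "pf f c d u = (\<Sum>i\<le>d. c i * \<mu>^i) *\<^sub>R u"
  unfolding pf_def by (simp add: funpow_eig[OF assms] scaleR_sum_left)

lemma quad_zero:
  fixes B \<alpha> :: real
  assumes B: "B \<ge> 0" and all: "\<And>t. 2 * t * B + t^2 * \<alpha> \<le> 0"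
  shows "B = 0"
proof (rule ccontr)
  assume "B \<noteq> 0"
  then have Bp: "B > 0" using B by simp
  define t where "t = B / (\<bar>\<alpha>\<bar> + 1)"
  have tp: "t > 0" using Bp by (simp add: t_def)
  have "t * (\<bar>\<alpha>\<bar> + 1) = B" by (simp add: t_def)
  then have "t * \<bar>\<alpha>\<bar> + t = B" by (simp add: distrib_left)
  then have "t * \<bar>\<alpha>\<bar> < B" using tp by linarith
  then have "t * t * \<bar>\<alpha>\<bar> < t * B" using tp by (simp add: mult.assoc)
  moreover have "t^2 * \<alpha> \<ge> - (t * t * \<bar>\<alpha>\<bar>)"
    by (simp add: power2_eq_square) (smt (verit) abs_ge_minus_self mult_left_mono zero_le_square mult_minus_right)
  moreover have "t * B > 0" using tp Bp by simp
  ultimately have "2 * t * B + t^2 * \<alpha> > 0" by linarith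
  with all[of t] show False by linarith
qed

lemma spectral_main:
  fixes f :: "'a::euclidean_space \<Rightarrow> 'a"
  assumes lin: "linear f" and sym: "\<And>x y. inner (f x) y = inner x (f y)"
  shows "dim V = n \<Longrightarrow> subspace V \<Longrightarrow> f ` V \<subseteq> V \<Longrightarrow>
    finite (eigs f V) \<and> (V \<noteq> {0} \<longrightarrow> eigs f V \<noteq> {}) \<and>
    (\<forall>c d S y. (\<forall>\<mu>\<in>eigs f V. \<bar>\<Sum>i\<le>d. c i * \<mu>^i\<bar> \<le> S) \<longrightarrow> y \<in> V \<longrightarrow>
        norm (pf f c d y) \<le> S * norm y)"
proof (induction n arbitrary: V rule: less_induct)
  case (less n)
  note V = less.prems(2) and fV = less.prems(3)
  have linpf: "linear (pf f c d)" for c d using linear_pf[OF lin] .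
  show ?case
  proof (cases "V = {0}")
    case True
    have "eigs f V = {}" unfolding eigs_def True by auto
    moreover have "pf f c d 0 = 0" for c d using linear_0[OF linpf] .
    ultimately show ?thesis using True by simp
  next
    case False
    then obtain v0 where v0: "v0 \<in> V" "v0 \<noteq> 0" using V subspace_0 by blast
    define K where "K = V \<inter> sphere 0 1"
    have cK: "compact K" unfolding K_def
      by (intro closed_Int_compact closed_subspace V compact_sphere)
    have "(1 / norm v0) *\<^sub>R v0 \<in> K"
      using v0 V by (simp add: K_def subspace_scale)
    then have neK: "K \<noteq> {}" by blast
    have contf: "continuous_on K f"
      using lin by (simp add: linear_conv_bounded_linear linear_continuous_on)
    have "continuous_on K (\<lambda>x. x \<bullet> f x)"
      by (intro continuous_intros contf)
    from continuous_attains_sup[OF cK neK this]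
    obtain u where uK: "u \<in> K" and umax: "\<And>z. z \<in> K \<Longrightarrow> z \<bullet> f z \<le> u \<bullet> f u" by blast
    define \<mu> where "\<mu> = u \<bullet> f u"
    have uV: "u \<in> V" and nu: "norm u = 1" using uK by (auto simp: K_def)
    have uu: "u \<bullet> u = 1" using nu by (simp add: dot_square_norm)
    have R: "z \<bullet> f z \<le> \<mu> * (z \<bullet> z)" if zV: "z \<in> V" for z
    proof (cases "z = 0")
      case True then show ?thesis using linear_0[OF lin] by simp
    next
      case False
      define z' where "z' = (1 / norm z) *\<^sub>R z"
      have "z' \<in> K" using zV False V by (simp add: K_def z'_def subspace_scale)
      then have "z' \<bullet> f z' \<le> \<mu>" using umax \<mu>_def by blast
      moreover have "z' \<bullet> f z' = (z \<bullet> f z) / (norm z)^2"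
        by (simp add: z'_def linear_cmul[OF lin] power2_eq_square)
      ultimately have "(z \<bullet> f z) / (norm z)^2 \<le> \<mu>" by simp
      then have "z \<bullet> f z \<le> \<mu> * (norm z)^2" using False
        by (simp add: divide_le_eq)
      then show ?thesis by (simp add: dot_square_norm)
    qed
    define w where "w = f u - \<mu> *\<^sub>R u"
    have wV: "w \<in> V" unfolding w_def using uV fV V
      by (intro subspace_diff subspace_scale) auto
    have fu: "f u = \<mu> *\<^sub>R u"
    proof -
      have "w \<bullet> w = 0"
      proof (rule quad_zero)
        show "w \<bullet> w \<ge> 0" by simp
        fix t :: real
        define p where "p = u \<bullet> w"
        define a where "a = w \<bullet> f w"
        define B where "B = w \<bullet> w"
        have "u + t *\<^sub>R w \<in> V" using uV wV V by (intro subspace_add subspace_scale) auto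
        from R[OF this]
        have Rt: "(u + t *\<^sub>R w) \<bullet> f (u + t *\<^sub>R w) \<le> \<mu> * ((u + t *\<^sub>R w) \<bullet> (u + t *\<^sub>R w))" .
        have fut: "f (u + t *\<^sub>R w) = f u + t *\<^sub>R f w"
          by (simp add: linear_add[OF lin] linear_cmul[OF lin])
        have sw: "u \<bullet> f w = w \<bullet> f u" using sym[of u w] by (simp add: inner_commute)
        have E3: "w \<bullet> f u = B + \<mu> * p"
          by (simp add: B_def p_def w_def inner_diff_left inner_diff_right inner_commute algebra_simps)
        have E1: "(u + t *\<^sub>R w) \<bullet> f (u + t *\<^sub>R w) = \<mu> + 2 * t * (w \<bullet> f u) + t^2 * a"
          unfolding fut by (simp add: inner_add_left inner_add_right sw \<mu>_def a_def power2_eq_square algebra_simps)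
        have E2: "(u + t *\<^sub>R w) \<bullet> (u + t *\<^sub>R w) = 1 + 2 * t * p + t^2 * B"
          using uu by (simp add: inner_add_left inner_add_right p_def B_def power2_eq_square algebra_simps inner_commute)
        have "\<mu> + 2 * t * (B + \<mu> * p) + t^2 * a \<le> \<mu> * (1 + 2 * t * p + t^2 * B)"
          using Rt unfolding E1 E2 E3 .
        then have "2 * t * B + t^2 * (a - \<mu> * B) \<le> 0"
          by (simp add: algebra_simps)
        then show "2 * t * (w \<bullet> w) + t^2 * (w \<bullet> f w - \<mu> * (w \<bullet> w)) \<le> 0"
          by (simp add: a_def B_def)
      qed
      then have "w = 0" by simp
      then show ?thesis by (simp add: w_def)
    qed
    define V' where "V' = V \<inter> {x. u \<bullet> x = 0}"
    have V'sub: "subspace V'" unfolding V'_def by (intro subspace_inter V subspace_hyperplane)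
    have fV': "f ` V' \<subseteq> V'"
    proof
      fix y assume "y \<in> f ` V'"
      then obtain x where x: "x \<in> V'" "y = f x" by blast
      have "u \<bullet> f x = f u \<bullet> x" using sym[of u x] by simp
      also have "\<dots> = 0" using x fu by (simp add: V'_def)
      finally show "y \<in> V'" using x fV by (auto simp: V'_def)
    qed
    have dimlt: "dim V' < n"
    proof -
      have "V' \<subseteq> V" by (auto simp: V'_def)
      moreover have "u \<notin> V'" using uu by (simp add: V'_def)
      ultimately have "V' \<subset> V" using uV by blast
      moreover have "span V' = V'" using V'sub by (simp add: span_eq_iff)
      moreover have "span V = V" using V by (simp add: span_eq_iff)
      ultimately have "span V' \<subset> span V" by (simp only:)
      then show ?thesis using dim_psubset less.prems(1) by blast
    qed
    have IH: "finite (eigs f V') \<and>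
      (\<forall>c d S y. (\<forall>\<mu>\<in>eigs f V'. \<bar>\<Sum>i\<le>d. c i * \<mu>^i\<bar> \<le> S) \<longrightarrow> y \<in> V' \<longrightarrow>
        norm (pf f c d y) \<le> S * norm y)"
      using less.IH[OF dimlt refl V'sub fV'] by blast
    have "u \<noteq> 0" using nu by auto
    then have muE: "\<mu> \<in> eigs f V" unfolding eigs_def using uV fu by blast
    have eigsub: "eigs f V \<subseteq> insert \<mu> (eigs f V')"
    proof
      fix \<nu> assume "\<nu> \<in> eigs f V"
      then obtain v where v: "v \<in> V" "v \<noteq> 0" "f v = \<nu> *\<^sub>R v" unfolding eigs_def by blast
      show "\<nu> \<in> insert \<mu> (eigs f V')"
      proof (cases "\<nu> = \<mu>")
        case False
        have "\<nu> * (u \<bullet> v) = u \<bullet> f v" using v by simp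
        also have "\<dots> = f u \<bullet> v" using sym[of u v] by simp
        also have "\<dots> = \<mu> * (u \<bullet> v)" using fu by simp
        finally have "u \<bullet> v = 0" using False by simp
        then have "v \<in> V'" using v by (simp add: V'_def)
        then show ?thesis using v unfolding eigs_def by blast
      qed simp
    qed
    have eigsub2: "eigs f V' \<subseteq> eigs f V" unfolding eigs_def V'_def by blast
    have fin: "finite (eigs f V)" using IH eigsub finite_subset by blast
    have bound: "norm (pf f c d y) \<le> S * norm y"
      if Sb: "\<forall>\<mu>\<in>eigs f V. \<bar>\<Sum>i\<le>d. c i * \<mu>^i\<bar> \<le> S" and yV: "y \<in> V" for c d S y
    proof -
      define s where "s = (\<Sum>i\<le>d. c i * \<mu>^i)"
      have sS: "\<bar>s\<bar> \<le> S" using Sb muE by (simp add: s_def)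
      then have S0: "S \<ge> 0" by simp
      define \<alpha> where "\<alpha> = u \<bullet> y"
      define w' where "w' = y - \<alpha> *\<^sub>R u"
      have w'V: "w' \<in> V'" unfolding V'_def w'_def using yV uV V uu
        by (auto simp: \<alpha>_def inner_diff_right intro!: subspace_diff subspace_scale)
      have yeq: "y = \<alpha> *\<^sub>R u + w'" by (simp add: w'_def)
      have pfy: "pf f c d y = (\<alpha> * s) *\<^sub>R u + pf f c d w'"
        unfolding yeq using linear_add[OF linpf] linear_cmul[OF linpf] pf_eig[OF fu lin]
        by (simp add: s_def)
      have pw'V: "pf f c d w' \<in> V'" using pf_inv[OF V'sub fV' w'V] .
      have orth1: "orthogonal ((\<alpha> * s) *\<^sub>R u) (pf f c d w')"
        using pw'V by (simp add: orthogonal_def V'_def)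
      have orth2: "orthogonal (\<alpha> *\<^sub>R u) w'"
        using w'V by (simp add: orthogonal_def V'_def)
      have n1: "(norm (pf f c d y))^2 = (\<alpha> * s)^2 + (norm (pf f c d w'))^2"
        unfolding pfy norm_add_Pythagorean[OF orth1] using nu by (simp add: power_mult_distrib)
      have n2: "(norm y)^2 = \<alpha>^2 + (norm w')^2"
        unfolding yeq norm_add_Pythagorean[OF orth2] using nu by simp
      have bw: "norm (pf f c d w') \<le> S * norm w'"
        using IH eigsub2 Sb w'V by blast
      have "(norm (pf f c d w'))^2 \<le> (S * norm w')^2"
        using bw by (intro power_mono) auto
      moreover have "(\<alpha> * s)^2 \<le> (\<alpha> * S)^2"
      proof -
        have "s^2 \<le> S^2" using sS by (metis abs_ge_zero power2_abs power_mono)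
        then show ?thesis by (simp add: power_mult_distrib mult_left_mono)
      qed
      ultimately have "(norm (pf f c d y))^2 \<le> (S * norm y)^2"
        unfolding n1 power_mult_distrib n2 by (simp add: algebra_simps)
      then show ?thesis by (rule power2_le_imp_le) (use S0 in simp)
    qed
    show ?thesis
    proof (intro conjI impI allI)
      show "finite (eigs f V)" by (rule fin)
      show "eigs f V \<noteq> {}" using muE by blast
      fix c d S y
      assume "\<forall>\<mu>\<in>eigs f V. \<bar>\<Sum>i\<le>d. c i * \<mu> ^ i\<bar> \<le> S" "y \<in> V"
      then show "norm (pf f c d y) \<le> S * norm y" by (rule bound)
    qed
  qed
qed


lemma sym_inner:
  fixes A :: "real^'n^'n"
  assumes "transpose A = A"
  shows "(A *v x) \<bullet> y = x \<bullet> (A *v y)"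
proof -
  have s: "A $ i $ j = A $ j $ i" for i j
  proof -
    have "A $ i $ j = transpose A $ i $ j" using assms by simp
    also have "\<dots> = A $ j $ i" by (simp add: transpose_def)
    finally show ?thesis .
  qed
  have "(A *v x) \<bullet> y = (\<Sum>i\<in>UNIV. \<Sum>j\<in>UNIV. A $ i $ j * x $ j * y $ i)"
    by (simp add: inner_vec_def matrix_vector_mult_def sum_distrib_right)
  also have "\<dots> = (\<Sum>j\<in>UNIV. \<Sum>i\<in>UNIV. A $ i $ j * x $ j * y $ i)" by (rule sum.swap)
  also have "\<dots> = x \<bullet> (A *v y)"
    by (simp add: inner_vec_def matrix_vector_mult_def sum_distrib_left s mult_ac)
  finally show ?thesis .
qed

lemma orth_coeff:
  fixes q :: "nat \<Rightarrow> 'a::real_inner"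
  assumes q_orth: "\<forall>i\<in>{1..k}. \<forall>j\<in>{1..k}. q i \<bullet> q j = (if i = j then 1 else 0)"
    and i: "i \<in> {1..k}"
  shows "q i \<bullet> (\<Sum>j=1..k. c j *\<^sub>R q j) = c i"
proof -
  have "q i \<bullet> (\<Sum>j=1..k. c j *\<^sub>R q j) = (\<Sum>j=1..k. if i = j then c j else 0)"
    unfolding inner_sum_right using q_orth i by (intro sum.cong) auto
  also have "\<dots> = c i" using i by (simp add: sum.delta)
  finally show ?thesis .
qed

theorem theorem3p8:
  fixes A :: "real^'n^'n" and g :: "real^'n" and \<Delta> :: real and k :: nat
    and q :: "nat \<Rightarrow> real^'n" and \<beta> :: real
    and h :: "nat \<Rightarrow> real" and lam :: real
  assumes symA: "transpose A = A"
    and g_nz: "g \<noteq> 0"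
    and Delta_pos: "\<Delta> > 0"
    and k_pos: "1 \<le> k"
    \<comment> \<open>Lanczos process: orthonormal q_1..q_k spanning the Krylov spaces, q_1 = g/||g||\<close>
    and q_orth: "\<forall>i\<in>{1..k}. \<forall>j\<in>{1..k}. q i \<bullet> q j = (if i = j then 1 else 0)"
    and q_span: "\<forall>j\<in>{1..k}. span (q ` {1..j}) = krylov A g j"
    and q_1: "q 1 = (1 / norm g) *\<^sub>R g"
    \<comment> \<open>A Q_k = Q_k T_k + beta_k q_(k+1) e_k^T with unit q_(k+1), beta_k >= 0\<close>
    and q_next: "norm (q (k+1)) = 1"
    and beta_nonneg: "\<beta> \<ge> 0"
    and lanczos_rel: "\<forall>j\<in>{1..k}. A *v q j =
          (\<Sum>i=1..k. lanczos_T A q i j *\<^sub>R q i) + (if j = k then \<beta> *\<^sub>R q (k+1) else 0)"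
    \<comment> \<open>h_k minimizes the trust-region subproblem, with multiplier lambda_k\<close>
    and h_feas: "norm_k k h \<le> \<Delta>"
    and h_min: "\<forall>h'. norm_k k h' \<le> \<Delta> \<longrightarrow>
          tr_obj k (lanczos_T A q) (norm g) h \<le> tr_obj k (lanczos_T A q) (norm g) h'"
    and lam_nonneg: "lam \<ge> 0"
    and kkt_eq: "\<forall>i\<in>{1..k}. (\<Sum>j=1..k. (lanczos_T A q i j + (if i = j then lam else 0)) * h j)
          = - norm g * (if i = 1 then 1 else 0)"
    and kkt_compl: "lam * (\<Delta> - norm_k k h) = 0"
    and kkt_pd: "pos_def_k k (\<lambda>i j. lanczos_T A q i j + (if i = j then lam else 0))"
  shows "let x = (\<Sum>i=1..k. h i *\<^sub>R q i);
             r = A *v x + lam *\<^sub>R x + g;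
             M = (\<lambda>i j. lanczos_T A q i j + (if i = j then lam else 0));
             \<kappa> = lam_max_k k M / lam_min_k k M
         in norm r \<le> 2 * \<beta> * norm x * ((sqrt \<kappa> - 1) / (sqrt \<kappa> + 1)) ^ (k - 1)"
proof -
  define Tm where "Tm = lanczos_T A q"
  define M where "M = (\<lambda>i j. lanczos_T A q i j + (if i = j then lam else 0))"
  define Pj where "Pj z = (\<Sum>i=1..k. (q i \<bullet> z) *\<^sub>R q i)" for z
  define L where "L z = A *v z + lam *\<^sub>R z" for z
  define f where "f z = Pj (L (Pj z))" for z
  define V where "V = span (q ` {1..k})"
  define x where "x = (\<Sum>i=1..k. h i *\<^sub>R q i)"
  have Tm_def': "Tm i j = q i \<bullet> (A *v q j)" for i j by (simp add: Tm_def lanczos_T_def)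
  have oc: "q i \<bullet> (\<Sum>j=1..k. c j *\<^sub>R q j) = c i" if "i \<in> {1..k}" for i c
    using orth_coeff[OF q_orth that] .
  have linPj: "linear Pj"
    by (rule linearI) (simp_all add: Pj_def inner_add_right scaleR_add_left sum.distrib scaleR_sum_right)
  have linL: "linear L"
    by (rule linearI) (simp_all add: L_def matrix_vector_right_distrib matrix_vector_mult_scaleR algebra_simps)
  have linf: "linear f"
  proof -
    have "f = Pj \<circ> L \<circ> Pj" by (auto simp: f_def[abs_def])
    then show ?thesis using linPj linL by (simp add: linear_compose)
  qed
  have PjV: "Pj z \<in> V" for z
    unfolding Pj_def V_def by (intro span_sum span_scale span_base) auto
  have Pjq: "q i \<bullet> Pj z = q i \<bullet> z" if "i \<in> {1..k}" for i z
    unfolding Pj_def using oc[OF that] .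
  have Pj_fix: "Pj z = z" if "z \<in> V" for z
  proof -
    have "subspace {z. Pj z - z = 0}"
    proof (rule linear_subspace_kernel, rule linearI)
      show "Pj (a + b) - (a + b) = (Pj a - a) + (Pj b - b)" for a b
        using linear_add[OF linPj] by (simp add: algebra_simps)
      show "Pj (r *\<^sub>R b) - r *\<^sub>R b = r *\<^sub>R (Pj b - b)" for r b
        using linear_cmul[OF linPj] by (simp add: algebra_simps)
    qed
    moreover have gen: "Pj (q j) - q j = 0" if "j \<in> {1..k}" for j
    proof -
      have "Pj (q j) = (\<Sum>i=1..k. if i = j then q i else 0)"
        unfolding Pj_def using q_orth that by (intro sum.cong) auto
      also have "\<dots> = q j" using that by (simp add: sum.delta)
      finally show ?thesis by simp
    qed
    moreover have "\<And>y. y \<in> q ` {1..k} \<Longrightarrow> Pj y - y = 0" using gen by blast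
    ultimately have "Pj z - z = 0"
      using span_induct[of z "q ` {1..k}" "\<lambda>z. Pj z - z = 0"] that unfolding V_def by blast
    then show ?thesis by simp
  qed
  have Pj_sym: "Pj a \<bullet> b = a \<bullet> Pj b" for a b
    unfolding Pj_def by (simp add: inner_sum_left inner_sum_right inner_commute mult.commute)
  have L_sym: "L a \<bullet> b = a \<bullet> L b" for a b
    unfolding L_def using sym_inner[OF symA] by (simp add: inner_add_left inner_add_right)
  have f_sym: "f a \<bullet> b = a \<bullet> f b" for a b
    unfolding f_def Pj_sym L_sym by (simp add: Pj_sym[symmetric])
  have k1: "1 \<in> {1..k}" and kk: "k \<in> {1..k}" using k_pos by auto
  have qq: "q i \<bullet> q i = 1" if "i \<in> {1..k}" for i using q_orth that by simp
  have nq: "norm (q i) = 1" if "i \<in> {1..k}" for i using qq[OF that] by (simp add: norm_eq_sqrt_inner)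
  have g_eq: "g = norm g *\<^sub>R q 1" unfolding q_1 using g_nz by simp
  have subV: "subspace V" unfolding V_def by (rule subspace_span)
  have xV: "x \<in> V" unfolding x_def V_def by (intro span_sum span_scale span_base) auto
  have Pjx: "Pj x = x" using Pj_fix[OF xV] .
  have qx: "q i \<bullet> x = h i" if "i \<in> {1..k}" for i unfolding x_def using oc[OF that] .
  have qLgen: "q i \<bullet> L (\<Sum>j=1..k. c j *\<^sub>R q j) = (\<Sum>j=1..k. M i j * c j)" if i: "i \<in> {1..k}" for i c
  proof -
    have "A *v (\<Sum>j=1..k. c j *\<^sub>R q j) = (\<Sum>j=1..k. c j *\<^sub>R (A *v q j))"
      by (simp add: vec.sum matrix_vector_mult_scaleR)
    then have "q i \<bullet> (A *v (\<Sum>j=1..k. c j *\<^sub>R q j)) = (\<Sum>j=1..k. Tm i j * c j)"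
      by (simp add: inner_sum_right Tm_def' mult.commute)
    moreover have "q i \<bullet> (lam *\<^sub>R (\<Sum>j=1..k. c j *\<^sub>R q j)) = lam * c i" using oc[OF i] by simp
    moreover have "(\<Sum>j=1..k. M i j * c j) = (\<Sum>j=1..k. Tm i j * c j) + (\<Sum>j=1..k. if i = j then lam * c j else 0)"
      unfolding sum.distrib[symmetric] by (intro sum.cong) (auto simp: M_def Tm_def algebra_simps)
    moreover have "(\<Sum>j=1..k. if i = j then lam * c j else 0) = lam * c i" using i by (simp add: sum.delta)
    ultimately show ?thesis by (simp add: L_def inner_add_right)
  qed
  have fx: "f x = - g"
  proof -
    have "f x = Pj (L x)" by (simp add: f_def Pjx)
    also have "\<dots> = (\<Sum>i=1..k. (- norm g * (if i = 1 then 1 else 0)) *\<^sub>R q i)"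
      unfolding Pj_def
    proof (intro sum.cong refl)
      fix i assume i: "i \<in> {1..k}"
      have "q i \<bullet> L x = (\<Sum>j=1..k. M i j * h j)" unfolding x_def by (rule qLgen[OF i])
      also have "\<dots> = - norm g * (if i = 1 then 1 else 0)" using kkt_eq i by (simp add: M_def)
      finally show "(q i \<bullet> L x) *\<^sub>R q i = (- norm g * (if i = 1 then 1 else 0)) *\<^sub>R q i" by simp
    qed
    also have "\<dots> = (\<Sum>i=1..k. if i = 1 then (- norm g) *\<^sub>R q i else 0)"
      by (intro sum.cong) auto
    also have "\<dots> = - g" using k1 g_eq by (simp add: sum.delta)
    finally show ?thesis .
  qed
  have PjAq: "Pj (A *v q j) = (\<Sum>i=1..k. Tm i j *\<^sub>R q i)" for j
    by (simp add: Pj_def Tm_def')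
  have Ax: "A *v x = Pj (A *v x) + (h k * \<beta>) *\<^sub>R q (k+1)"
  proof -
    have "A *v x = (\<Sum>j=1..k. h j *\<^sub>R (A *v q j))"
      by (simp add: x_def vec.sum matrix_vector_mult_scaleR)
    also have "\<dots> = (\<Sum>j=1..k. h j *\<^sub>R Pj (A *v q j) + (if j = k then (h j * \<beta>) *\<^sub>R q (k+1) else 0))"
    proof (intro sum.cong refl)
      fix j assume j: "j \<in> {1..k}"
      have e: "A *v q j = (\<Sum>i=1..k. Tm i j *\<^sub>R q i) + (if j = k then \<beta> *\<^sub>R q (k+1) else 0)"
        using lanczos_rel j unfolding Tm_def by blast
      have e': "A *v q j = Pj (A *v q j) + (if j = k then \<beta> *\<^sub>R q (k+1) else 0)"
        using e unfolding PjAq[symmetric] .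
      have "h j *\<^sub>R (A *v q j) = h j *\<^sub>R (Pj (A *v q j) + (if j = k then \<beta> *\<^sub>R q (k+1) else 0))"
        by (rule arg_cong[where f="\<lambda>v. h j *\<^sub>R v", OF e'])
      then show "h j *\<^sub>R (A *v q j) = h j *\<^sub>R Pj (A *v q j) + (if j = k then (h j * \<beta>) *\<^sub>R q (k+1) else 0)"
        by (simp only: scaleR_add_right) simp
    qed
    also have "\<dots> = (\<Sum>j=1..k. h j *\<^sub>R Pj (A *v q j)) + (h k * \<beta>) *\<^sub>R q (k+1)"
      using kk by (simp add: sum.distrib sum.delta')
    also have "(\<Sum>j=1..k. h j *\<^sub>R Pj (A *v q j)) = Pj (A *v x)"
      by (simp add: x_def vec.sum matrix_vector_mult_scaleR linear_sum[OF linPj] linear_cmul[OF linPj])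
    finally show ?thesis .
  qed
  have Lx: "L x = Pj (L x) + (h k * \<beta>) *\<^sub>R q (k+1)"
  proof -
    have "Pj (L x) = Pj (A *v x) + lam *\<^sub>R x"
      by (simp add: L_def linear_add[OF linPj] linear_cmul[OF linPj] Pjx)
    then show ?thesis using Ax by (simp add: L_def)
  qed
  have r_eq: "A *v x + lam *\<^sub>R x + g = (h k * \<beta>) *\<^sub>R q (k+1)"
  proof -
    have "A *v x + lam *\<^sub>R x = L x" by (simp add: L_def)
    also have "\<dots> = f x + (h k * \<beta>) *\<^sub>R q (k+1)" using Lx by (simp add: f_def Pjx)
    finally show ?thesis using fx by simp
  qed
  have nr: "norm (A *v x + lam *\<^sub>R x + g) = \<bar>h k\<bar> * \<beta>"
    unfolding r_eq using q_next beta_nonneg by (simp add: abs_mult)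
  have KA: "A *v z \<in> krylov A g (Suc m)" if "z \<in> krylov A g m" for z m
  proof -
    let ?G = "\<lambda>m. {((\<lambda>v. A *v v) ^^ i) g | i. i < m}"
    have "A *v z \<in> (\<lambda>v. A *v v) ` span (?G m)" using that unfolding krylov_def by blast
    also have "\<dots> = span ((\<lambda>v. A *v v) ` ?G m)"
      by (rule linear_span_image[symmetric]) (rule matrix_vector_mul_linear)
    also have "\<dots> \<subseteq> span (?G (Suc m))"
    proof (rule span_mono, rule subsetI)
      fix y assume "y \<in> (\<lambda>v. A *v v) ` ?G m"
      then obtain i where i: "i < m" "y = A *v (((\<lambda>v. A *v v) ^^ i) g)" by blast
      then have "y = ((\<lambda>v. A *v v) ^^ Suc i) g" by simp
      then show "y \<in> ?G (Suc m)" using i by blast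
    qed
    finally show ?thesis unfolding krylov_def .
  qed
  have LS: "L z \<in> span (q ` {1..Suc m})" if z: "z \<in> span (q ` {1..m})" and m: "1 \<le> m" "m < k" for z m
  proof -
    have "z \<in> krylov A g m" using z q_span m by auto
    then have "A *v z \<in> krylov A g (Suc m)" by (rule KA)
    then have Az: "A *v z \<in> span (q ` {1..Suc m})" using q_span m by auto
    have "span (q ` {1..m}) \<subseteq> span (q ` {1..Suc m})" by (intro span_mono) auto
    then have "z \<in> span (q ` {1..Suc m})" using z by blast
    then show ?thesis unfolding L_def using Az by (intro span_add span_scale)
  qed
  have spanV: "span (q ` {1..m}) \<subseteq> V" if "m \<le> k" for m
    unfolding V_def using that by (intro span_mono) auto
  have FP: "(f^^i) (q 1) \<in> span (q ` {1..Suc i})" if "Suc i \<le> k" for i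
    using that
  proof (induction i)
    case 0 then show ?case by (intro span_base) auto
  next
    case (Suc i)
    have z: "(f^^i) (q 1) \<in> span (q ` {1..Suc i})" using Suc by simp
    then have zV: "(f^^i) (q 1) \<in> V" using spanV[of "Suc i"] Suc.prems by auto
    have Lz: "L ((f^^i) (q 1)) \<in> span (q ` {1..Suc (Suc i)})" using LS[OF z] Suc.prems by simp
    then have LV: "L ((f^^i) (q 1)) \<in> V" using spanV[of "Suc (Suc i)"] Suc.prems by auto
    have "(f^^Suc i) (q 1) = L ((f^^i) (q 1))" using Pj_fix[OF zV] Pj_fix[OF LV] by (simp add: f_def)
    then show ?case using Lz by simp
  qed
  have orth: "q k \<bullet> z = 0" if z: "z \<in> span (q ` {1..m})" and m: "m < k" for z m
  proof -
    have "\<And>y. y \<in> q ` {1..m} \<Longrightarrow> q k \<bullet> y = 0" using q_orth m k_pos by auto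
    then show ?thesis using span_induct[of z "q ` {1..m}" "\<lambda>z. q k \<bullet> z = 0"] z subspace_hyperplane
      by blast
  qed
  have linfp: "linear (f^^j)" for j using linear_funpow[OF linf] .
  have qkfx: "q k \<bullet> (f^^i) x = 0" if i: "1 \<le> i" "i \<le> k - 1" for i
  proof -
    obtain j where j: "i = Suc j" using i by (cases i) auto
    have "(f^^i) x = (f^^j) (f x)" by (simp add: j funpow_Suc_right del: funpow.simps)
    also have "\<dots> = - (norm g *\<^sub>R (f^^j) (q 1))"
      using fx g_eq linear_neg[OF linfp] linear_cmul[OF linfp] by metis
    finally have e: "(f^^i) x = - (norm g *\<^sub>R (f^^j) (q 1))" .
    have "q k \<bullet> (f^^j) (q 1) = 0" using orth[OF FP] i j by simp
    then show ?thesis unfolding e by simp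
  qed
  have fVV: "f ` V \<subseteq> V" using PjV by (auto simp: f_def)
  have q1V: "q 1 \<in> V" unfolding V_def using k1 by (intro span_base) auto
  have q1nz: "q 1 \<noteq> 0" using qq[OF k1] by auto
  have Vne: "V \<noteq> {0}" using q1V q1nz by auto
  define E where "E = {\<mu>. is_eigenvalue_k k M \<mu>}"
  have eig_eq: "eigs f V = E"
  proof (rule set_eqI, rule iffI)
    fix \<mu> assume "\<mu> \<in> eigs f V"
    then obtain v where v: "v \<in> V" "v \<noteq> 0" "f v = \<mu> *\<^sub>R v" unfolding eigs_def by blast
    define c where "c j = q j \<bullet> v" for j
    have Pv: "Pj v = v" using Pj_fix[OF v(1)] .
    have vc: "v = (\<Sum>j=1..k. c j *\<^sub>R q j)" using Pv by (simp add: Pj_def c_def)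
    have "\<exists>i\<in>{1..k}. c i \<noteq> 0"
    proof (rule ccontr)
      assume "\<not> ?thesis"
      then have "v = (\<Sum>j=1..k. 0 *\<^sub>R q j)" unfolding vc by (intro sum.cong) auto
      then show False using v(2) by simp
    qed
    moreover have "(\<Sum>j=1..k. M i j * c j) = \<mu> * c i" if i: "i \<in> {1..k}" for i
    proof -
      have "(\<Sum>j=1..k. M i j * c j) = q i \<bullet> L v" using qLgen[OF i, of c] vc by simp
      also have "\<dots> = q i \<bullet> f v" by (simp add: f_def Pv Pjq[OF i])
      also have "\<dots> = \<mu> * c i" using v(3) by (simp add: c_def)
      finally show ?thesis .
    qed
    ultimately show "\<mu> \<in> E" unfolding E_def is_eigenvalue_k_def by blast
  next
    fix \<mu> assume "\<mu> \<in> E"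
    then obtain c where c: "\<exists>i\<in>{1..k}. c i \<noteq> 0" "\<forall>i\<in>{1..k}. (\<Sum>j=1..k. M i j * c j) = \<mu> * c i"
      unfolding E_def is_eigenvalue_k_def by blast
    define z where "z = (\<Sum>j=1..k. c j *\<^sub>R q j)"
    have zV: "z \<in> V" unfolding z_def V_def by (intro span_sum span_scale span_base) auto
    have "z \<noteq> 0"
    proof
      assume "z = 0"
      then have "c i = 0" if "i \<in> {1..k}" for i using oc[OF that, of c] by (simp add: z_def)
      then show False using c(1) by blast
    qed
    moreover have "f z = \<mu> *\<^sub>R z"
    proof -
      have "f z = Pj (L z)" by (simp add: f_def Pj_fix[OF zV])
      also have "\<dots> = (\<Sum>i=1..k. (\<mu> * c i) *\<^sub>R q i)"
        unfolding Pj_def using qLgen c(2) by (intro sum.cong) (auto simp: z_def)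
      also have "\<dots> = \<mu> *\<^sub>R z" by (simp add: z_def scaleR_sum_right)
      finally show ?thesis .
    qed
    ultimately show "\<mu> \<in> eigs f V" unfolding eigs_def using zV by blast
  qed
  have SM: "finite (eigs f V) \<and> (V \<noteq> {0} \<longrightarrow> eigs f V \<noteq> {}) \<and>
    (\<forall>c d S y. (\<forall>\<mu>\<in>eigs f V. \<bar>\<Sum>i\<le>d. c i * \<mu>^i\<bar> \<le> S) \<longrightarrow> y \<in> V \<longrightarrow>
        norm (pf f c d y) \<le> S * norm y)"
    by (rule spectral_main[OF linf f_sym refl subV fVV])
  have finE: "finite E" and neE: "E \<noteq> {}" using SM Vne eig_eq by auto
  have posE: "\<mu> > 0" if muE: "\<mu> \<in> E" for \<mu>
  proof -
    obtain v where v: "\<exists>i\<in>{1..k}. v i \<noteq> 0" "\<forall>i\<in>{1..k}. (\<Sum>j=1..k. M i j * v j) = \<mu> * v i"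
      using muE unfolding E_def is_eigenvalue_k_def by blast
    have pd: "(\<Sum>i=1..k. \<Sum>j=1..k. v i * M i j * v j) > 0"
    proof -
      have pd0: "pos_def_k k M" unfolding M_def by (rule kkt_pd)
      then have "\<forall>w::nat\<Rightarrow>real. (\<exists>i\<in>{1..k}. w i \<noteq> 0) \<longrightarrow>
          (\<Sum>i=1..k. \<Sum>j=1..k. w i * M i j * w j) > 0" unfolding pos_def_k_def .
      from this[rule_format, OF v(1)] show ?thesis .
    qed
    have "(\<Sum>i=1..k. \<Sum>j=1..k. v i * M i j * v j) = (\<Sum>i=1..k. v i * (\<Sum>j=1..k. M i j * v j))"
      by (simp add: sum_distrib_left mult.assoc)
    also have "\<dots> = (\<Sum>i=1..k. \<mu> * (v i)^2)"
      using v(2) by (intro sum.cong) (auto simp: power2_eq_square)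
    also have "\<dots> = \<mu> * (\<Sum>i=1..k. (v i)^2)" by (simp add: sum_distrib_left)
    finally have "\<mu> * (\<Sum>i=1..k. (v i)^2) > 0" using pd by simp
    moreover have "(\<Sum>i=1..k. (v i)^2) \<ge> 0" by (intro sum_nonneg) auto
    ultimately show ?thesis by (simp add: zero_less_mult_iff)
  qed
  define a where "a = lam_min_k k M"
  define b where "b = lam_max_k k M"
  have aE: "a = Min E" and bE: "b = Max E" by (simp_all add: a_def b_def lam_min_k_def lam_max_k_def E_def)
  have a0: "a > 0" using posE Min_in[OF finE neE] aE by simp
  have ab: "a \<le> b" using Min_le[OF finE] Max_in[OF finE neE] aE bE by simp
  define S where "S = 2 * ((sqrt (b/a) - 1) / (sqrt (b/a) + 1)) ^ (k - 1)"
  obtain c where c0: "c 0 = 1"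
    and cb: "\<forall>t\<in>{a..b}. \<bar>\<Sum>i\<le>k-1. c i * t^i\<bar> \<le> S"
    using cheb_poly_exists[OF a0 ab, of "k-1"] unfolding S_def by blast
  have "\<forall>\<mu>\<in>eigs f V. \<bar>\<Sum>i\<le>k-1. c i * \<mu>^i\<bar> \<le> S"
  proof
    fix \<mu> assume "\<mu> \<in> eigs f V"
    then have "\<mu> \<in> E" using eig_eq by simp
    then have "\<mu> \<in> {a..b}" using Min_le[OF finE] Max_ge[OF finE] aE bE by simp
    then show "\<bar>\<Sum>i\<le>k-1. c i * \<mu>^i\<bar> \<le> S" using cb by blast
  qed
  then have pfb: "norm (pf f c (k-1) x) \<le> S * norm x" using SM xV by blast
  have qkpf: "q k \<bullet> pf f c (k-1) x = h k"
  proof -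
    have "q k \<bullet> pf f c (k-1) x = (\<Sum>i\<le>k-1. c i * (q k \<bullet> (f^^i) x))"
      by (simp add: pf_def inner_sum_right)
    also have "\<dots> = (\<Sum>i\<le>k-1. if i = 0 then h k else 0)"
    proof (intro sum.cong refl)
      fix i assume i: "i \<in> {..k-1}"
      show "c i * (q k \<bullet> (f^^i) x) = (if i = 0 then h k else 0)"
      proof (cases "i = 0")
        case True then show ?thesis using c0 qx[OF kk] by simp
      next
        case False then show ?thesis using qkfx[of i] i by simp
      qed
    qed
    also have "\<dots> = h k" by simp
    finally show ?thesis .
  qed
  have hk: "\<bar>h k\<bar> \<le> S * norm x"
  proof -
    have "\<bar>h k\<bar> \<le> norm (q k) * norm (pf f c (k-1) x)"
      using Cauchy_Schwarz_ineq2[of "q k" "pf f c (k-1) x"] qkpf by simp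
    then show ?thesis using nq[OF kk] pfb by simp
  qed
  have fin: "norm (A *v x + lam *\<^sub>R x + g) \<le> 2 * \<beta> * norm x * ((sqrt (b/a) - 1) / (sqrt (b/a) + 1)) ^ (k - 1)"
  proof -
    have "norm (A *v x + lam *\<^sub>R x + g) = \<beta> * \<bar>h k\<bar>" using nr by simp
    also have "\<dots> \<le> \<beta> * (S * norm x)" using hk beta_nonneg by (rule mult_left_mono)
    finally show ?thesis by (simp add: S_def mult_ac)
  qed
  show ?thesis
    unfolding Let_def x_def[symmetric] M_def[symmetric] a_def[symmetric] b_def[symmetric]
    using fin .
qed

end
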